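(* Let $G=(V,E)$ be a grid graph, and let $P_G=\{(x-y,\,x+y): (x,y)\in V\}\subset\mathbb{R}^2$. Then the vertex set of $G$ can be partitioned into vertex-disjoint paths on three vertices if and only if there exists a set of $\frac{2|V|}{3}$ axis-parallel unit squares discriminating $P_G$ (in particular $|V|$ is divisible by $3$).
   Context: A grid graph is a graph whose vertex set is a finite subset of $\mathbb{Z}^2$, two vertices being adjacent iff they are at Euclidean distance $1$. An axis-parallel unit square is a closed square $[x,x+1]\times[y,y+1]\subset\mathbb{R}^2$. A set $S'$ of objects discriminates $P$ if for every $p\in P$ the set $S'_p=\{s\in S': p\in s\}$ is nonempty, and $S'_p\neq S'_q$ for all distinct $p,q\in P$. *)

theory Defs
  imports Complex_Main
begin

definition grid_adj :: "int \<times> int \<Rightarrow> int \<times> int \<Rightarrow> bool" where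
  "grid_adj p q \<longleftrightarrow> (real_of_int (fst p - fst q))^2 + (real_of_int (snd p - snd q))^2 = 1"

definition is_P3 :: "(int \<times> int) set \<Rightarrow> (int \<times> int) set \<Rightarrow> bool" where
  "is_P3 V T \<longleftrightarrow> (\<exists>a b c. a \<noteq> b \<and> b \<noteq> c \<and> a \<noteq> c \<and> T = {a, b, c} \<and> T \<subseteq> V
      \<and> grid_adj a b \<and> grid_adj b c)"

definition P3_partitionable :: "(int \<times> int) set \<Rightarrow> bool" where
  "P3_partitionable V \<longleftrightarrow> (\<exists>\<Pi>. (\<forall>T\<in>\<Pi>. is_P3 V T) \<and> (\<forall>T1\<in>\<Pi>. \<forall>T2\<in>\<Pi>. T1 \<noteq> T2 \<longrightarrow> T1 \<inter> T2 = {}) \<and> \<Union>\<Pi> = V)"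

definition unit_square :: "real \<Rightarrow> real \<Rightarrow> (real \<times> real) set" where
  "unit_square x y = {p. x \<le> fst p \<and> fst p \<le> x + 1 \<and> y \<le> snd p \<and> snd p \<le> y + 1}"

definition is_unit_square :: "(real \<times> real) set \<Rightarrow> bool" where
  "is_unit_square s \<longleftrightarrow> (\<exists>x y. s = unit_square x y)"

definition discriminates :: "'a set set \<Rightarrow> 'a set \<Rightarrow> bool" where
  "discriminates S P \<longleftrightarrow>
     (\<forall>p\<in>P. {s\<in>S. p \<in> s} \<noteq> {}) \<and>
     (\<forall>p\<in>P. \<forall>q\<in>P. p \<noteq> q \<longrightarrow> {s\<in>S. p \<in> s} \<noteq> {s\<in>S. q \<in> s})"

definition rotated_points :: "(int \<times> int) set \<Rightarrow> (real \<times> real) set" where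
  "rotated_points V = (\<lambda>(x, y). (real_of_int (x - y), real_of_int (x + y))) ` V"

end

theory Submission
  imports Defs
begin


definition fr :: "int \<times> int \<Rightarrow> real \<times> real" where
  "fr p = (real_of_int (fst p - snd p), real_of_int (fst p + snd p))"

lemma rot_eq: "rotated_points V = fr ` V"
  unfolding rotated_points_def fr_def by (auto simp: case_prod_beta)

lemma inj_fr: "inj fr"
  unfolding inj_def fr_def by auto

lemma int_sq1: "(a::int)^2 + b^2 = 1 \<longleftrightarrow> \<bar>a\<bar> + \<bar>b\<bar> = 1"
proof
  assume h: "a^2 + b^2 = 1"
  have "a^2 \<ge> 0" "b^2 \<ge> 0" by auto
  have ha: "\<bar>a\<bar> \<le> 1"
  proof (rule ccontr)
    assume "\<not> \<bar>a\<bar> \<le> 1" then have "\<bar>a\<bar> \<ge> 2" by simp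
    then have "\<bar>a\<bar>^2 \<ge> 2^2" by (rule power_mono) simp
    then show False using h \<open>b^2 \<ge> 0\<close> by simp
  qed
  have hb: "\<bar>b\<bar> \<le> 1"
  proof (rule ccontr)
    assume "\<not> \<bar>b\<bar> \<le> 1" then have "\<bar>b\<bar> \<ge> 2" by simp
    then have "\<bar>b\<bar>^2 \<ge> 2^2" by (rule power_mono) simp
    then show False using h \<open>a^2 \<ge> 0\<close> by simp
  qed
  have "a \<in> {-1,0,1}" "b \<in> {-1,0,1}" using ha hb by auto
  then show "\<bar>a\<bar> + \<bar>b\<bar> = 1" using h by auto
next
  assume "\<bar>a\<bar> + \<bar>b\<bar> = 1"
  then have "a \<in> {-1,0,1}" "b \<in> {-1,0,1}" "\<bar>a\<bar> + \<bar>b\<bar> = 1" by auto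
  then show "a^2 + b^2 = 1" by auto
qed

lemma grid_adj_iff: "grid_adj p q \<longleftrightarrow> \<bar>fst p - fst q\<bar> + \<bar>snd p - snd q\<bar> = 1"
proof -
  have "grid_adj p q \<longleftrightarrow> real_of_int ((fst p - fst q)^2 + (snd p - snd q)^2) = real_of_int 1"
    unfolding grid_adj_def by simp
  also have "\<dots> \<longleftrightarrow> (fst p - fst q)^2 + (snd p - snd q)^2 = 1" by (rule of_int_eq_iff)
  finally show ?thesis using int_sq1 by simp
qed

lemma grid_adj_sym: "grid_adj p q \<Longrightarrow> grid_adj q p"
  unfolding grid_adj_iff by arith

lemma grid_adj_neq: "grid_adj p q \<Longrightarrow> p \<noteq> q"
  unfolding grid_adj_iff by auto

lemma grid_adj_odd: "grid_adj p q \<Longrightarrow> odd ((fst p + snd p) - (fst q + snd q))"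
  unfolding grid_adj_iff by presburger

lemma no_triangle: "grid_adj a b \<Longrightarrow> grid_adj b c \<Longrightarrow> \<not> grid_adj a c"
proof
  assume "grid_adj a b" "grid_adj b c" "grid_adj a c"
  then have "odd ((fst a + snd a) - (fst b + snd b))" "odd ((fst b + snd b) - (fst c + snd c))"
     "odd ((fst a + snd a) - (fst c + snd c))" using grid_adj_odd by blast+
  then show False by presburger
qed

lemma sq_close:
  assumes "fr p \<in> unit_square x y" "fr q \<in> unit_square x y"
  shows "\<bar>(fst p - snd p) - (fst q - snd q)\<bar> \<le> 1 \<and> \<bar>(fst p + snd p) - (fst q + snd q)\<bar> \<le> 1"
proof -
  have a: "\<bar>real_of_int ((fst p - snd p) - (fst q - snd q))\<bar> \<le> 1"
    using assms unfolding unit_square_def fr_def by auto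
  have b: "\<bar>real_of_int ((fst p + snd p) - (fst q + snd q))\<bar> \<le> 1"
    using assms unfolding unit_square_def fr_def by auto
  from a b show ?thesis by linarith
qed

lemma sq_adj:
  assumes "is_unit_square s" "fr p \<in> s" "fr q \<in> s" "p \<noteq> q"
  shows "grid_adj p q"
proof -
  obtain x y where s: "s = unit_square x y" using assms(1) unfolding is_unit_square_def by auto
  have h: "\<bar>(fst p - snd p) - (fst q - snd q)\<bar> \<le> 1 \<and> \<bar>(fst p + snd p) - (fst q + snd q)\<bar> \<le> 1"
    using sq_close assms s by blast
  have "fst p \<noteq> fst q \<or> snd p \<noteq> snd q" using assms(4) by (auto simp: prod_eq_iff)
  then show ?thesis unfolding grid_adj_iff using h by presburger
qed

lemma trace_le2:
  assumes "is_unit_square s" "finite V"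
  shows "card {z\<in>V. fr z \<in> s} \<le> 2"
proof (cases "\<exists>p q. {z\<in>V. fr z \<in> s} \<subseteq> {p, q}")
  case True
  then obtain p q where "{z\<in>V. fr z \<in> s} \<subseteq> {p, q}" by blast
  then have "card {z\<in>V. fr z \<in> s} \<le> card {p,q}" by (intro card_mono) auto
  also have "\<dots> \<le> 2" by (simp add: card_insert_if)
  finally show ?thesis .
next
  case False
  then obtain p where p: "p \<in> V" "fr p \<in> s" by blast
  from False obtain q where q: "q \<in> V" "fr q \<in> s" "q \<noteq> p" by blast
  from False obtain r where r: "r \<in> V" "fr r \<in> s" "r \<noteq> p" "r \<noteq> q" by blast
  have "grid_adj p q" "grid_adj q r" "grid_adj p r" using sq_adj assms p q r by metis+
  then show ?thesis using no_triangle by blast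
qed


lemma card2_elems: "card A = 2 \<Longrightarrow> z \<in> A \<Longrightarrow> q \<in> A \<Longrightarrow> q \<noteq> z \<Longrightarrow> A = {z, q}"
  by (auto simp: card_2_iff)

lemma card2_other: "card A = 2 \<Longrightarrow> z \<in> A \<Longrightarrow> \<exists>q. q \<noteq> z \<and> A = {z, q}"
  by (auto simp: card_2_iff)

lemma forward:
  assumes fin: "finite V" and finS: "finite S" and sq: "\<forall>s\<in>S. is_unit_square s"
    and cardS: "3 * card S = 2 * card V" and disc: "discriminates S (fr ` V)"
  shows "P3_partitionable V"
proof -
  define tr where "tr s = {z\<in>V. fr z \<in> s}" for s
  define Sz where "Sz z = {s\<in>S. fr z \<in> s}" for z
  define dg where "dg z = card (Sz z)" for z
  define w where "w s z = (if card (tr s) = 1 then 6 else if dg z = 1 then 4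
      else if (\<exists>q\<in>tr s. q \<noteq> z \<and> dg q = 1) then 2 else (3::nat))" for s z
  have finSz: "finite (Sz z)" for z unfolding Sz_def using finS by simp
  have fintr: "finite (tr s)" for s unfolding tr_def using fin by simp
  have trV: "tr s \<subseteq> V" for s unfolding tr_def by auto
  have D1: "Sz z \<noteq> {}" if "z \<in> V" for z
    using disc that unfolding discriminates_def Sz_def by auto
  have D2: "Sz z \<noteq> Sz z'" if "z \<in> V" "z' \<in> V" "z \<noteq> z'" for z z'
  proof -
    have "fr z \<noteq> fr z'" using inj_fr that(3) by (auto dest: injD)
    then show ?thesis using disc that unfolding discriminates_def Sz_def by auto
  qed
  have dg1: "Sz z = {s}" if "dg z = 1" "s \<in> Sz z" for z s
    using that unfolding dg_def by (metis card_1_singletonE singletonD)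
  have mem_Sz: "s \<in> Sz z \<longleftrightarrow> s \<in> S \<and> fr z \<in> s" for s z unfolding Sz_def by auto
  have mem_tr: "z \<in> tr s \<longleftrightarrow> z \<in> V \<and> fr z \<in> s" for s z unfolding tr_def by auto
  have notboth: False if "s \<in> S" "p \<in> tr s" "q \<in> tr s" "p \<noteq> q" "dg p = 1" "dg q = 1" for s p q
  proof -
    have "Sz p = {s}" "Sz q = {s}" using dg1 that mem_Sz mem_tr by auto
    moreover have "p \<in> V" "q \<in> V" using that(2,3) mem_tr by auto
    ultimately show False using D2[of p q] that(4) by auto
  qed
  have tr_le2: "card (tr s) \<le> 2" if "s \<in> S" for s
    unfolding tr_def using trace_le2 sq that fin by blast
  have w_ge2: "w s z \<ge> 2" for s z unfolding w_def by auto
  have swap: "(\<Sum>z\<in>V. \<Sum>s\<in>Sz z. w s z) = (\<Sum>s\<in>S. \<Sum>z\<in>tr s. w s z)"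
    unfolding Sz_def tr_def by (rule sum.swap_restrict[OF fin finS])
  have persq: "(\<Sum>z\<in>tr s. w s z) \<le> 6" if "s \<in> S" for s
  proof -
    have "card (tr s) = 0 \<or> card (tr s) = 1 \<or> card (tr s) = 2" using tr_le2[OF that] by auto
    moreover
    { assume "card (tr s) = 0"
      then have "tr s = {}" using fintr by auto
      then have ?thesis by simp }
    moreover
    { assume c: "card (tr s) = 1"
      then obtain p where "tr s = {p}" by (auto simp: card_1_singleton_iff)
      then have ?thesis using c unfolding w_def by simp }
    moreover
    { assume c: "card (tr s) = 2"
      then obtain p q where pq: "tr s = {p, q}" "p \<noteq> q" by (auto simp: card_2_iff)
      have nb: "\<not> (dg p = 1 \<and> dg q = 1)" using notboth[OF that, of p q] pq by auto
      have "(\<Sum>z\<in>tr s. w s z) = w s p + w s q" using pq by simp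
      also have "\<dots> = 6" using c nb pq unfolding w_def by auto
      finally have ?thesis by simp }
    ultimately show ?thesis by blast
  qed
  have tot: "(\<Sum>z\<in>V. \<Sum>s\<in>Sz z. w s z) \<le> 4 * card V"
  proof -
    have "(\<Sum>s\<in>S. \<Sum>z\<in>tr s. w s z) \<le> (\<Sum>s\<in>S. 6)" by (rule sum_mono) (use persq in auto)
    then show ?thesis using swap cardS by simp
  qed
  have pt_lb: "2 * dg z \<le> (\<Sum>s\<in>Sz z. w s z)" for z
  proof -
    have "(\<Sum>s\<in>Sz z. 2) \<le> (\<Sum>s\<in>Sz z. w s z)" by (rule sum_mono) (use w_ge2 in auto)
    then show ?thesis unfolding dg_def by (simp add: mult.commute)
  qed
  have dg_pos: "dg z \<ge> 1" if "z \<in> V" for z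
    using D1[OF that] finSz unfolding dg_def by (simp add: Suc_le_eq card_gt_0_iff)
  have pt4: "4 \<le> (\<Sum>s\<in>Sz z. w s z)" if "z \<in> V" for z
  proof (cases "dg z \<ge> 2")
    case True then show ?thesis using pt_lb[of z] by linarith
  next
    case False
    then have d: "dg z = 1" using dg_pos[OF that] by simp
    then obtain s where "Sz z = {s}" unfolding dg_def by (auto simp: card_1_singleton_iff)
    then have "(\<Sum>s\<in>Sz z. w s z) = w s z" by simp
    moreover have "w s z \<ge> 4" using d unfolding w_def by simp
    ultimately show ?thesis by simp
  qed
  have pteq: "(\<Sum>s\<in>Sz z. w s z) = 4" if "z \<in> V" for z
  proof -
    have "(\<Sum>z\<in>V. (4::nat)) = (\<Sum>z\<in>V. \<Sum>s\<in>Sz z. w s z)"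
    proof (rule antisym)
      show "(\<Sum>z\<in>V. (4::nat)) \<le> (\<Sum>z\<in>V. \<Sum>s\<in>Sz z. w s z)" by (rule sum_mono) (use pt4 in auto)
      show "(\<Sum>z\<in>V. \<Sum>s\<in>Sz z. w s z) \<le> (\<Sum>z\<in>V. (4::nat))" using tot by simp
    qed
    from sum_mono_inv[OF this _ that fin] pt4 show ?thesis by auto
  qed
  have E1: "dg z \<le> 2" if "z \<in> V" for z using pt_lb[of z] pteq[OF that] by linarith
  have E2: "card (tr s) = 2" if "z \<in> V" "s \<in> Sz z" for z s
  proof -
    have "w s z \<le> (\<Sum>s\<in>Sz z. w s z)" by (rule member_le_sum) (use that finSz in auto)
    then have "w s z \<le> 4" using pteq[OF that(1)] by simp
    then have "card (tr s) \<noteq> 1" unfolding w_def by auto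
    moreover have "z \<in> tr s" using that mem_Sz mem_tr by auto
    then have "card (tr s) \<ge> 1" using fintr by (simp add: Suc_le_eq card_gt_0_iff; blast)
    moreover have "s \<in> S" using that mem_Sz by auto
    ultimately show ?thesis using tr_le2 by fastforce
  qed
  have E3: "\<exists>q\<in>tr s. q \<noteq> z \<and> dg q = 1" if h: "z \<in> V" "dg z = 2" "s \<in> Sz z" for z s
  proof -
    obtain s1 s2 where ss: "Sz z = {s1, s2}" "s1 \<noteq> s2" using h(2) unfolding dg_def by (auto simp: card_2_iff)
    have "w s1 z + w s2 z = 4" using pteq[OF h(1)] ss by simp
    then have "w s z = 2" using ss h(3) w_ge2[of s1 z] w_ge2[of s2 z] by auto
    moreover have "card (tr s) \<noteq> 1" using E2 h by simp
    ultimately show ?thesis using h(2) unfolding w_def by (auto split: if_splits)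
  qed
  have K: "z = b \<or> (dg z = 1 \<and> Sz z = {s})" if h: "b \<in> V" "dg b = 2" "s \<in> Sz b" "z \<in> tr s" for b s z
  proof -
    obtain q where q: "q \<in> tr s" "q \<noteq> b" "dg q = 1" using E3 h by blast
    have "b \<in> tr s" using h mem_Sz mem_tr by auto
    then have "tr s = {b, q}" using card2_elems[OF E2[OF h(1,3)]] q by auto
    then have "z = b \<or> z = q" using h(4) by auto
    moreover have "s \<in> Sz q" using q h mem_Sz mem_tr by auto
    ultimately show ?thesis using q dg1[of q s] by auto
  qed
  define T where "T b = \<Union>(tr ` Sz b)" for b
  define Pi where "Pi = T ` {b\<in>V. dg b = 2}"
  have P3: "is_P3 V (T b)" if h: "b \<in> V" "dg b = 2" for b
  proof -
    obtain s1 s2 where ss: "Sz b = {s1, s2}" "s1 \<noteq> s2" using h(2) unfolding dg_def by (auto simp: card_2_iff)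
    have sin: "s1 \<in> Sz b" "s2 \<in> Sz b" using ss(1) by blast+
    obtain a where a: "a \<in> tr s1" "a \<noteq> b" "dg a = 1" using E3[OF h sin(1)] by blast
    obtain c where c: "c \<in> tr s2" "c \<noteq> b" "dg c = 1" using E3[OF h sin(2)] by blast
    have b1: "b \<in> tr s1" "b \<in> tr s2" using h(1) sin unfolding mem_Sz mem_tr by auto
    have t1: "tr s1 = {b, a}" by (rule card2_elems[OF E2[OF h(1) sin(1)] b1(1) a(1) a(2)])
    have t2: "tr s2 = {b, c}" by (rule card2_elems[OF E2[OF h(1) sin(2)] b1(2) c(1) c(2)])
    have Tb: "T b = {a, b, c}" unfolding T_def ss(1) using t1 t2 by (simp add: insert_commute)
    have "a \<noteq> c"
    proof
      assume "a = c"
      have "s1 \<in> S" "s2 \<in> S" using sin unfolding mem_Sz by blast+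
      moreover have "fr a \<in> s1" using a(1) unfolding mem_tr by blast
      moreover have "fr a \<in> s2" using c(1) \<open>a = c\<close> unfolding mem_tr by blast
      ultimately have "s1 \<in> Sz a" "s2 \<in> Sz a" unfolding mem_Sz by blast+
      then show False using dg1[OF a(3)] ss(2) by blast
    qed
    have s1S: "s1 \<in> S" "s2 \<in> S" using sin unfolding mem_Sz by auto
    have f1: "fr a \<in> s1" "fr b \<in> s1" "fr b \<in> s2" "fr c \<in> s2" using a(1) b1 c(1) unfolding mem_tr by blast+
    have g1: "grid_adj a b" using sq_adj[of s1 a b] sq s1S(1) a(2) f1 by blast
    have g2: "grid_adj b c" using sq_adj[of s2 b c] sq s1S(2) c(2) f1 by blast
    have sub: "T b \<subseteq> V" unfolding T_def using trV by auto
    have "a \<noteq> b \<and> b \<noteq> c \<and> a \<noteq> c \<and> T b = {a,b,c} \<and> T b \<subseteq> V \<and> grid_adj a b \<and> grid_adj b c"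
      using a(2) c(2) \<open>a \<noteq> c\<close> Tb sub g1 g2 by simp
    then show ?thesis unfolding is_P3_def by blast
  qed
  have U: "\<Union>Pi = V"
  proof
    show "\<Union>Pi \<subseteq> V" unfolding Pi_def T_def using trV by auto
    show "V \<subseteq> \<Union>Pi"
    proof
      fix z assume z: "z \<in> V"
      have "dg z = 1 \<or> dg z = 2" using E1[OF z] dg_pos[OF z] by auto
      then show "z \<in> \<Union>Pi"
      proof
        assume d: "dg z = 2"
        obtain s where "s \<in> Sz z" using D1[OF z] by auto
        then have "z \<in> T z" unfolding T_def using z mem_Sz mem_tr by auto
        moreover have "T z \<in> Pi" unfolding Pi_def using z d by blast
        ultimately show ?thesis by blast
      next
        assume d: "dg z = 1"
        obtain s where s: "s \<in> Sz z" using D1[OF z] by auto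
        have zt: "z \<in> tr s" using s z mem_Sz mem_tr by auto
        obtain q where q: "q \<noteq> z" "tr s = {z, q}" using card2_other[OF E2[OF z s] zt] by auto
        have qV: "q \<in> V" using q trV by auto
        have sS: "s \<in> S" using s mem_Sz by auto
        have "dg q \<noteq> 1" using notboth[OF sS zt, of q] q d by auto
        then have dq: "dg q = 2" using E1[OF qV] dg_pos[OF qV] by auto
        have "q \<in> tr s" using q(2) by blast
        then have "s \<in> Sz q" using sS unfolding mem_Sz mem_tr by blast
        then have "z \<in> T q" unfolding T_def using zt by auto
        moreover have "T q \<in> Pi" unfolding Pi_def using qV dq by blast
        ultimately show ?thesis by blast
      qed
    qed
  qed
  have disj: "T1 \<inter> T2 = {}" if h: "T1 \<in> Pi" "T2 \<in> Pi" "T1 \<noteq> T2" for T1 T2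
  proof (rule ccontr)
    assume "T1 \<inter> T2 \<noteq> {}"
    then obtain z where z: "z \<in> T1" "z \<in> T2" by auto
    obtain b where b: "b \<in> V" "dg b = 2" "T1 = T b" using h(1) unfolding Pi_def by auto
    obtain b' where b': "b' \<in> V" "dg b' = 2" "T2 = T b'" using h(2) unfolding Pi_def by auto
    obtain s where s: "s \<in> Sz b" "z \<in> tr s" using z b unfolding T_def by auto
    obtain s' where s': "s' \<in> Sz b'" "z \<in> tr s'" using z b' unfolding T_def by auto
    have k1: "z = b \<or> (dg z = 1 \<and> Sz z = {s})" using K[OF b(1,2) s] .
    have k2: "z = b' \<or> (dg z = 1 \<and> Sz z = {s'})" using K[OF b'(1,2) s'] .
    have "b = b'"
    proof -
      { assume "z = b" "z = b'" then have ?thesis by simp }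
      moreover
      { assume "dg z = 1" "Sz z = {s}" "Sz z = {s'}"
        then have "s = s'" by auto
        then have "b' \<in> tr s" using s' b' mem_Sz mem_tr by auto
        then have "b' = b \<or> (dg b' = 1 \<and> Sz b' = {s})" using K[OF b(1,2) s(1)] by blast
        then have ?thesis using b'(2) by auto }
      ultimately show ?thesis using k1 k2 b b' by auto
    qed
    then show False using b b' h(3) by simp
  qed
  have allP3: "\<forall>T\<in>Pi. is_P3 V T" unfolding Pi_def using P3 by blast
  show ?thesis unfolding P3_partitionable_def
    by (intro exI[of _ Pi] conjI allP3 U) (use disj in blast)
qed



definition sq :: "int \<times> int \<Rightarrow> int \<times> int \<Rightarrow> (real \<times> real) set" where
  "sq p q = unit_square (real_of_int (min (fst p - snd p) (fst q - snd q)))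
                        (real_of_int (min (fst p + snd p) (fst q + snd q)))"

lemma sq_sym: "sq p q = sq q p" unfolding sq_def by (simp add: min.commute)

lemma sq_is: "is_unit_square (sq p q)" unfolding sq_def is_unit_square_def by blast

lemma rle: "real_of_int m \<le> real_of_int x \<and> real_of_int x \<le> real_of_int m + 1 \<longleftrightarrow> m \<le> x \<and> x \<le> m + 1"
  by (metis of_int_1 of_int_add of_int_le_iff)

lemma rle2: "(real_of_int m \<le> real_of_int x \<and> real_of_int x \<le> real_of_int m + 1 \<and> R) \<longleftrightarrow> (m \<le> x \<and> x \<le> m + 1 \<and> R)"
  using rle by blast

lemma fr_in_sq_int: "fr z \<in> sq p q \<longleftrightarrow>
   (min (fst p - snd p) (fst q - snd q) \<le> fst z - snd z \<and> fst z - snd z \<le> min (fst p - snd p) (fst q - snd q) + 1) \<and>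
   (min (fst p + snd p) (fst q + snd q) \<le> fst z + snd z \<and> fst z + snd z \<le> min (fst p + snd p) (fst q + snd q) + 1)"
  unfolding sq_def unit_square_def fr_def mem_Collect_eq fst_conv snd_conv by (simp only: rle2 rle conj_assoc)

lemma int_case: 
  fixes a b c d x y :: int
  assumes "\<bar>a - c\<bar> + \<bar>b - d\<bar> = 1"
  shows "((min (a-b) (c-d) \<le> x-y \<and> x-y \<le> min (a-b) (c-d) + 1) \<and>
          (min (a+b) (c+d) \<le> x+y \<and> x+y \<le> min (a+b) (c+d) + 1)) \<longleftrightarrow> ((x = a \<and> y = b) \<or> (x = c \<and> y = d))"
proof -
  have "(c = a+1 \<and> d = b) \<or> (c = a - 1 \<and> d = b) \<or> (c = a \<and> d = b+1) \<or> (c = a \<and> d = b - 1)"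
    using assms by arith
  then show ?thesis by (elim disjE; simp; presburger)
qed

lemma fr_in_sq: "grid_adj p q \<Longrightarrow> fr z \<in> sq p q \<longleftrightarrow> z = p \<or> z = q"
  unfolding fr_in_sq_int grid_adj_iff prod_eq_iff using int_case by blast


lemma grid_adj_irrefl: "\<not> grid_adj p p" using grid_adj_neq by blast

lemma P3_struct:
  assumes "is_P3 V T"
  obtains a b c where "a \<noteq> b" "b \<noteq> c" "a \<noteq> c" "T = {a, b, c}" "T \<subseteq> V"
    "grid_adj a b" "grid_adj b c" "grid_adj b a" "grid_adj c b" "\<not> grid_adj a c" "\<not> grid_adj c a"
proof -
  from assms obtain a b c where h: "a \<noteq> b" "b \<noteq> c" "a \<noteq> c" "T = {a, b, c}" "T \<subseteq> V"
    "grid_adj a b" "grid_adj b c" unfolding is_P3_def by blast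
  show ?thesis using that[OF h grid_adj_sym[OF h(6)] grid_adj_sym[OF h(7)] no_triangle[OF h(6,7)]]
    no_triangle[OF grid_adj_sym[OF h(7)] grid_adj_sym[OF h(6)]] by blast
qed

lemma backward:
  assumes fin: "finite V" and P: "P3_partitionable V"
  shows "\<exists>S. finite S \<and> (\<forall>s\<in>S. is_unit_square s) \<and>
         real (card S) = 2 * real (card V) / 3 \<and> discriminates S (fr ` V)"
proof -
  obtain Pi where Pi3: "\<forall>T\<in>Pi. is_P3 V T" and Pid: "\<forall>T1\<in>Pi. \<forall>T2\<in>Pi. T1 \<noteq> T2 \<longrightarrow> T1 \<inter> T2 = {}"
    and PiU: "\<Union>Pi = V" using P unfolding P3_partitionable_def by blast
  have finPi: "finite Pi" using PiU fin by (metis finite_UnionD)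
  define ST where "ST T = {sq p q | p q. p \<in> T \<and> q \<in> T \<and> grid_adj p q}" for T
  define S where "S = \<Union>(ST ` Pi)"
  have STeq: "ST T = {sq a b, sq b c}" and STne: "sq a b \<noteq> sq b c"
    if "a \<noteq> b" "b \<noteq> c" "a \<noteq> c" "T = {a, b, c}"
    "grid_adj a b" "grid_adj b c" "grid_adj b a" "grid_adj c b" "\<not> grid_adj a c" "\<not> grid_adj c a"
    for T a b c
  proof -
    show "ST T = {sq a b, sq b c}"
    proof
      show "ST T \<subseteq> {sq a b, sq b c}"
      proof
        fix s assume "s \<in> ST T"
        then obtain p q where pq: "s = sq p q" "p \<in> T" "q \<in> T" "grid_adj p q" unfolding ST_def by blast
        have "(p = a \<and> q = b) \<or> (p = b \<and> q = a) \<or> (p = b \<and> q = c) \<or> (p = c \<and> q = b)"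
          using pq(2,3,4) that(4,9,10) grid_adj_irrefl[of p] by blast
        then show "s \<in> {sq a b, sq b c}" using pq(1) sq_sym[of a b] sq_sym[of b c] by blast
      qed
      show "{sq a b, sq b c} \<subseteq> ST T" unfolding ST_def using that by blast
    qed
    have "fr c \<in> sq b c" using fr_in_sq[OF that(6)] by simp
    moreover have "fr c \<notin> sq a b" using fr_in_sq[OF that(5)] that by simp
    ultimately show "sq a b \<noteq> sq b c" by blast
  qed
  have card3: "card T = 3" and card2: "card (ST T) = 2" and finST: "finite (ST T)" if hT: "T \<in> Pi" for T
  proof -
    obtain a b c where abc: "a \<noteq> b" "b \<noteq> c" "a \<noteq> c" "T = {a, b, c}" "T \<subseteq> V"
      "grid_adj a b" "grid_adj b c" "grid_adj b a" "grid_adj c b" "\<not> grid_adj a c" "\<not> grid_adj c a"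
      using Pi3 hT by - (rule P3_struct[of V T], blast+)
    show "card T = 3" using abc by simp
    show "card (ST T) = 2" using STeq[OF abc(1-4,6-11)] STne[OF abc(1-4,6-11)] by simp
    show "finite (ST T)" using STeq[OF abc(1-4,6-11)] by simp
  qed
  have sq_in: "fr z \<in> s \<Longrightarrow> s \<in> ST T \<Longrightarrow> z \<in> T" for z s T
  proof -
    assume "fr z \<in> s" "s \<in> ST T"
    then obtain p q where "s = sq p q" "p \<in> T" "q \<in> T" "grid_adj p q" "fr z \<in> s" unfolding ST_def by blast
    then show "z \<in> T" using fr_in_sq[of p q z] by auto
  qed
  have STdisj: "ST T1 \<inter> ST T2 = {}" if "T1 \<in> Pi" "T2 \<in> Pi" "T1 \<noteq> T2" for T1 T2
  proof (rule ccontr)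
    assume "ST T1 \<inter> ST T2 \<noteq> {}"
    then obtain s where s: "s \<in> ST T1" "s \<in> ST T2" by blast
    then obtain p q where "s = sq p q" "p \<in> T1" "q \<in> T1" "grid_adj p q" unfolding ST_def by blast
    then have "fr p \<in> s" using fr_in_sq[of p q p] by auto
    then have "p \<in> T2" using sq_in s(2) by blast
    then show False using Pid that \<open>p \<in> T1\<close> by blast
  qed
  have cS: "card S = 2 * card Pi"
  proof -
    have "card S = (\<Sum>T\<in>Pi. card (ST T))" unfolding S_def
      by (rule card_UN_disjoint) (use finPi finST STdisj in auto)
    also have "\<dots> = (\<Sum>T\<in>Pi. 2)" using card2 by simp
    finally show ?thesis by simp
  qed
  have cV: "card V = 3 * card Pi"
  proof -
    have "card V = card (\<Union>Pi)" using PiU by simp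
    also have "\<dots> = sum card Pi"
      by (rule card_Union_disjoint) (use Pid fin PiU in \<open>auto simp: pairwise_def disjnt_def intro: finite_subset\<close>)
    also have "\<dots> = (\<Sum>T\<in>Pi. 3)" using card3 by simp
    finally show ?thesis by simp
  qed
  have finS: "finite S" unfolding S_def using finPi finST by blast
  have sqS: "\<forall>s\<in>S. is_unit_square s" unfolding S_def ST_def using sq_is by blast
  have memS: "s \<in> S \<and> fr z \<in> s \<longleftrightarrow> (\<exists>q\<in>T. grid_adj z q \<and> s = sq z q)" if "z \<in> T" "T \<in> Pi" for z T s
  proof
    assume h: "s \<in> S \<and> fr z \<in> s"
    then obtain T' where T': "T' \<in> Pi" "s \<in> ST T'" unfolding S_def by blast
    then obtain p q where pq: "s = sq p q" "p \<in> T'" "q \<in> T'" "grid_adj p q" unfolding ST_def by blast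
    have "z \<in> T'" using sq_in h T' by blast
    then have "T' = T" using Pid T' that by blast
    have "z = p \<or> z = q" using fr_in_sq[OF pq(4)] h pq(1) by blast
    then show "\<exists>q\<in>T. grid_adj z q \<and> s = sq z q"
      using pq \<open>T' = T\<close> sq_sym grid_adj_sym by blast
  next
    assume "\<exists>q\<in>T. grid_adj z q \<and> s = sq z q"
    then obtain q where q: "q \<in> T" "grid_adj z q" "s = sq z q" by blast
    then have "s \<in> ST T" unfolding ST_def using that by blast
    then have "s \<in> S" unfolding S_def using that by blast
    moreover have "fr z \<in> s" using q fr_in_sq[of z q z] by auto
    ultimately show "s \<in> S \<and> fr z \<in> s" by blast
  qed
  have inPi: "\<exists>T\<in>Pi. z \<in> T" if "z \<in> V" for z using that PiU by blast
  have nbr: "\<exists>q\<in>T. grid_adj z q" if hT: "z \<in> T" "T \<in> Pi" for z T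
  proof -
    obtain a b c where abc: "a \<noteq> b" "b \<noteq> c" "a \<noteq> c" "T = {a, b, c}" "T \<subseteq> V"
      "grid_adj a b" "grid_adj b c" "grid_adj b a" "grid_adj c b" "\<not> grid_adj a c" "\<not> grid_adj c a"
      using Pi3 hT(2) by - (rule P3_struct[of V T], blast+)
    show ?thesis using abc(4,6,8,9) hT(1) by blast
  qed
  have disc: "discriminates S (fr ` V)"
    unfolding discriminates_def
  proof (intro conjI ballI impI)
    fix pt assume "pt \<in> fr ` V"
    then obtain z where z: "z \<in> V" "pt = fr z" by blast
    obtain T where T: "T \<in> Pi" "z \<in> T" using inPi z by blast
    obtain q where "q \<in> T" "grid_adj z q" using nbr T by blast
    then have "sq z q \<in> S \<and> fr z \<in> sq z q" using memS[OF T(2,1)] by blast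
    then show "{s \<in> S. pt \<in> s} \<noteq> {}" using z by blast
  next
    fix pt pt' assume "pt \<in> fr ` V" "pt' \<in> fr ` V" "pt \<noteq> pt'"
    then obtain z z' where z: "z \<in> V" "pt = fr z" "z' \<in> V" "pt' = fr z'" "z \<noteq> z'" by blast
    show "{s \<in> S. pt \<in> s} \<noteq> {s \<in> S. pt' \<in> s}"
    proof
      assume eq: "{s \<in> S. pt \<in> s} = {s \<in> S. pt' \<in> s}"
      have eq2: "s \<in> S \<and> fr z \<in> s \<longleftrightarrow> s \<in> S \<and> fr z' \<in> s" for s
        using eq z by (metis (mono_tags, lifting) mem_Collect_eq)
      obtain T where T: "T \<in> Pi" "z \<in> T" using inPi z by blast
      obtain a b c where abc: "a \<noteq> b" "b \<noteq> c" "a \<noteq> c" "T = {a, b, c}" "T \<subseteq> V"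
        "grid_adj a b" "grid_adj b c" "grid_adj b a" "grid_adj c b" "\<not> grid_adj a c" "\<not> grid_adj c a"
        using Pi3 T(1) by - (rule P3_struct[of V T], blast+)
      have key: "\<not> grid_adj z w" if "w \<in> T" "w \<noteq> z'" for w
      proof
        assume "grid_adj z w"
        then have "sq z w \<in> S \<and> fr z \<in> sq z w" using memS[OF T(2,1)] that by blast
        then have "fr z' \<in> sq z w" using eq2 by blast
        then show False using fr_in_sq[OF \<open>grid_adj z w\<close>, of z'] that z(5) by auto
      qed
      obtain q where q: "q \<in> T" "grid_adj z q" using nbr T by blast
      then have "q = z'" using key by blast
      then have z'T: "z' \<in> T" using q by simp
      have key': "\<not> grid_adj z' w" if "w \<in> T" "w \<noteq> z" for w
      proof
        assume "grid_adj z' w"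
        then have "sq z' w \<in> S \<and> fr z' \<in> sq z' w" using memS[OF z'T T(1)] that by blast
        then have "fr z \<in> sq z' w" using eq2 by blast
        then show False using fr_in_sq[OF \<open>grid_adj z' w\<close>, of z] that z(5) by auto
      qed
      have inT: "a \<in> T" "b \<in> T" "c \<in> T" using abc(4) by blast+
      have zz: "z = a \<or> z = b \<or> z = c" "z' = a \<or> z' = b \<or> z' = c" using abc(4) T(2) z'T by blast+
      note k = key[OF inT(1)] key[OF inT(2)] key[OF inT(3)] key'[OF inT(1)] key'[OF inT(2)] key'[OF inT(3)]
      from zz show False
        by (elim disjE) (use k abc(1-3,6-9) z(5) in simp_all)
    qed
  qed
  have "real (card S) = 2 * real (card V) / 3" using cS cV by simp
  then show ?thesis using finS sqS disc by blast
qed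


theorem mainTheorem11:
  fixes V :: "(int \<times> int) set"
  assumes "finite V"
  shows "P3_partitionable V \<longleftrightarrow>
    (\<exists>S. finite S \<and> (\<forall>s\<in>S. is_unit_square s) \<and>
         real (card S) = 2 * real (card V) / 3 \<and>
         discriminates S (rotated_points V))"
proof
  assume "P3_partitionable V"
  then show "\<exists>S. finite S \<and> (\<forall>s\<in>S. is_unit_square s) \<and>
         real (card S) = 2 * real (card V) / 3 \<and> discriminates S (rotated_points V)"
    using backward[OF assms] unfolding rot_eq by blast
next
  assume "\<exists>S. finite S \<and> (\<forall>s\<in>S. is_unit_square s) \<and>
         real (card S) = 2 * real (card V) / 3 \<and> discriminates S (rotated_points V)"
  then obtain S where S: "finite S" "\<forall>s\<in>S. is_unit_square s"
    "real (card S) = 2 * real (card V) / 3" "discriminates S (fr ` V)" unfolding rot_eq by blast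
  have "real (3 * card S) = real (2 * card V)" using S(3) by simp
  then have "3 * card S = 2 * card V" by (simp only: of_nat_eq_iff)
  then show "P3_partitionable V" using forward[OF assms S(1,2) _ S(4)] by blast
qed

end
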